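(* Let $\mathcal P$ be a CPOS $2n$-gon, let $i,j$ be indices with $j\notin\{i-1,i,i+n-1,i+n\}$ (mod $2n$), and let $\lambda_0\in\mathbb R$ be such that $f_i(\lambda_0)\neq0$, the vertex $P_i(\lambda_0)$ lies in the relative interior of the edge $[P_j(\lambda_0),P_{j+1}(\lambda_0)]$ of $\mathcal P_{\lambda_0}$, and this crossing is transversal, i.e. $\lambda\mapsto[P_i(\lambda)-P_j(\lambda),e(j+\tfrac12)(\lambda)]$ has nonzero derivative at $\lambda_0$. For $\lambda$ near $\lambda_0$ let $\Gamma_-(\lambda)$ (resp. $\Gamma_+(\lambda)$) be the intersection of the segment $[P_j(\lambda),P_{j+1}(\lambda)]$ with $[P_{i-1}(\lambda),P_i(\lambda)]$ (resp. $[P_i(\lambda),P_{i+1}(\lambda)]$); these are the two branches of the equidistant symmetry set meeting at the vertex $P_i(\lambda_0)$. Then, for some $\epsilon>0$, all points of $\bigcup_{0<|\lambda-\lambda_0|<\epsilon}(\Gamma_-(\lambda)\cup\Gamma_+(\lambda))$ lie in one and the same open half-plane bounded by the great diagonal $d_i$ (the vertex is a cusp of the equidistant symmetry set) if and only if $f_i(\lambda_0)<0$, i.e. if and only if $P_i(\lambda_0)$ belongs to the central symmetry set.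
   Context: A CPOS $2n$-gon ($n\ge2$) is a closed planar polygon $\mathcal P$ with vertices $P_1,\dots,P_{2n}$ (indices mod $2n$) bounding a convex region, with no two adjacent sides parallel, with $P_{i+n+1}-P_{i+n}$ parallel to $P_{i+1}-P_i$ for all $i$, and positively oriented: $[P_{i+1}-P_i,P_{j+1}-P_j]>0$ for $1\le i<j\le n$ ($[\cdot,\cdot]$ = determinant). $d_i$ is the line through $P_i,P_{i+n}$; $D(i+\tfrac12)=d_i\cap d_{i+1}$; the central symmetry set is the closed polygon with vertices $D(1+\frac12),\dots,D(n+\frac12)$. The equidistant of level $\lambda\in\mathbb R$ is the polygon $\mathcal P_\lambda$ with vertices $P_i(\lambda)=P_i+\lambda(P_{i+n}-P_i)$ and edge vectors $e(i+\tfrac12)(\lambda)=P_{i+1}(\lambda)-P_i(\lambda)$; $f_i(\lambda)=[e(i-\tfrac12)(\lambda),e(i+\tfrac12)(\lambda)]$. The equidistant symmetry set is the set of self-intersection points of the equidistants $\mathcal P_\lambda$, $\lambda\in\mathbb R$ (points lying on two non-adjacent edges of the same $\mathcal P_\lambda$). *)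

theory Defs
  imports "HOL-Analysis.Analysis"
begin

text \<open>Planar points are complex numbers; [u,v] is the determinant.\<close>
definition det2 :: "complex \<Rightarrow> complex \<Rightarrow> real" where
  "det2 u v = Re u * Im v - Im u * Re v"

text \<open>Polygons: vertex functions on int indices, periodic mod 2n.\<close>
definition edgev :: "(int \<Rightarrow> complex) \<Rightarrow> int \<Rightarrow> complex" where
  "edgev P i = P (i + 1) - P i"

definition convex_polygon :: "nat \<Rightarrow> (int \<Rightarrow> complex) \<Rightarrow> bool" where
  "convex_polygon n P \<longleftrightarrow>
     (\<forall>i. P (i + 2 * int n) = P i) \<and>
     inj_on P {1 .. 2 * int n} \<and>
     (\<forall>i k. det2 (edgev P i) (P k - P i) \<ge> 0)"

definition CPOS :: "nat \<Rightarrow> (int \<Rightarrow> complex) \<Rightarrow> bool" where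
  "CPOS n P \<longleftrightarrow>
     n \<ge> 2 \<and>
     convex_polygon n P \<and>
     (\<forall>i. det2 (edgev P (i - 1)) (edgev P i) \<noteq> 0) \<and>
     (\<forall>i. det2 (edgev P (i + int n)) (edgev P i) = 0) \<and>
     (\<forall>i j. 1 \<le> i \<and> i < j \<and> j \<le> int n \<longrightarrow> det2 (edgev P i) (edgev P j) > 0)"

definition eqd :: "nat \<Rightarrow> (int \<Rightarrow> complex) \<Rightarrow> real \<Rightarrow> int \<Rightarrow> complex" where
  "eqd n P l i = P i + complex_of_real l * (P (i + int n) - P i)"

text \<open>e(i+1/2)(lambda)\<close>
definition eqd_edge :: "nat \<Rightarrow> (int \<Rightarrow> complex) \<Rightarrow> real \<Rightarrow> int \<Rightarrow> complex" where
  "eqd_edge n P l i = eqd n P l (i + 1) - eqd n P l i"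

definition fcurv :: "nat \<Rightarrow> (int \<Rightarrow> complex) \<Rightarrow> int \<Rightarrow> real \<Rightarrow> real" where
  "fcurv n P i l = det2 (eqd_edge n P l (i - 1)) (eqd_edge n P l i)"

definition diag_halfplane :: "nat \<Rightarrow> (int \<Rightarrow> complex) \<Rightarrow> int \<Rightarrow> real \<Rightarrow> complex set" where
  "diag_halfplane n P i s = {x. s * det2 (P (i + int n) - P i) (x - P i) > 0}"

end

theory Submission
  imports Defs
begin


lemma det2_add_left[simp]: "det2 (a + b) c = det2 a c + det2 b c"
  by (simp add: det2_def algebra_simps)
lemma det2_add_right[simp]: "det2 c (a + b) = det2 c a + det2 c b"
  by (simp add: det2_def algebra_simps)
lemma det2_diff_left[simp]: "det2 (a - b) c = det2 a c - det2 b c"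
  by (simp add: det2_def algebra_simps)
lemma det2_diff_right[simp]: "det2 c (a - b) = det2 c a - det2 c b"
  by (simp add: det2_def algebra_simps)
lemma det2_minus_left[simp]: "det2 (- a) c = - det2 a c"
  by (simp add: det2_def algebra_simps)
lemma det2_minus_right[simp]: "det2 c (- a) = - det2 c a"
  by (simp add: det2_def algebra_simps)
lemma det2_scale_left[simp]: "det2 (complex_of_real r * a) c = r * det2 a c"
  by (simp add: det2_def algebra_simps)
lemma det2_scale_right[simp]: "det2 c (complex_of_real r * a) = r * det2 c a"
  by (simp add: det2_def algebra_simps)
lemma det2_scale_left'[simp]: "det2 (a * complex_of_real r) c = r * det2 a c"
  by (simp add: det2_def algebra_simps)
lemma det2_scale_right'[simp]: "det2 c (a * complex_of_real r) = r * det2 c a"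
  by (simp add: det2_def algebra_simps)
lemma det2_scaleR_left[simp]: "det2 (r *\<^sub>R a) c = r * det2 a c"
  by (simp add: det2_def algebra_simps)
lemma det2_scaleR_right[simp]: "det2 c (r *\<^sub>R a) = r * det2 c a"
  by (simp add: det2_def algebra_simps)
lemma det2_self[simp]: "det2 a a = 0"
  by (simp add: det2_def algebra_simps)
lemma det2_zero_left[simp]: "det2 0 a = 0" by (simp add: det2_def)
lemma det2_zero_right[simp]: "det2 a 0 = 0" by (simp add: det2_def)
lemma det2_swap: "det2 a b = - det2 b a"
  by (simp add: det2_def algebra_simps)

lemma Re_ofr_mult[simp]: "Re (complex_of_real c * y) = c * Re y" by (cases y) simp
lemma Im_ofr_mult[simp]: "Im (complex_of_real c * y) = c * Im y" by simp

lemma det2_par: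
  assumes "det2 x y = 0" "y \<noteq> 0"
  shows "\<exists>c. x = complex_of_real c * y"
proof -
  have n: "(Re y)^2 + (Im y)^2 \<noteq> 0" using assms(2)
    by (metis complex_eq_0)
  let ?c = "(Re x * Re y + Im x * Im y) / ((Re y)^2 + (Im y)^2)"
  have h: "Re x * Im y - Im x * Re y = 0" using assms(1) unfolding det2_def .
  have e1: "Re x * ((Re y)^2 + (Im y)^2) = (Re x * Re y + Im x * Im y) * Re y"
    using h by algebra
  have e2: "Im x * ((Re y)^2 + (Im y)^2) = (Re x * Re y + Im x * Im y) * Im y"
    using h by algebra
  have "x = complex_of_real ?c * y"
    using e1 e2 n
    by (intro complex_eqI) (simp_all add: field_simps)
  then show ?thesis by blast
qed

lemma cramer:
  assumes "det2 E W \<noteq> 0"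
  shows "X = complex_of_real (det2 X W / det2 E W) * E + complex_of_real (det2 X E / det2 W E) * W"
proof -
  have s: "det2 W E = - det2 E W" by (rule det2_swap)
  have k: "complex_of_real (det2 E W) * X = complex_of_real (det2 X W) * E - complex_of_real (det2 X E) * W"
    unfolding det2_def by (intro complex_eqI) (simp_all, algebra+)
  have "X = (complex_of_real (det2 E W) * X) / complex_of_real (det2 E W)"
    using assms by simp
  also have "\<dots> = complex_of_real (det2 X W / det2 E W) * E + complex_of_real (det2 X E / det2 W E) * W"
    unfolding k s using assms by (simp add: field_simps)
  finally show ?thesis .
qed

lemma continuous_det2[continuous_intros]:
  "continuous F f \<Longrightarrow> continuous F g \<Longrightarrow> continuous F (\<lambda>x. det2 (f x) (g x))"
  unfolding det2_def by (intro continuous_intros continuous_Re continuous_Im)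

lemma seg_line:
  assumes "x \<in> closed_segment J (J + W)"
  shows "det2 (x - J) W = 0"
proof -
  obtain u where "x = (1 - u) *\<^sub>R J + u *\<^sub>R (J + W)" using assms by (auto simp: in_segment)
  then have "x - J = u *\<^sub>R W" by (simp add: algebra_simps)
  then show ?thesis by simp
qed

lemma G1:
  assumes "x \<in> closed_segment J (J + W)" "x \<in> closed_segment (Q - E) Q"
    "det2 (Q - J) W \<noteq> 0"
  shows "\<exists>t. 0 < t \<and> t \<le> 1 \<and> x = Q - complex_of_real t * E"
proof -
  obtain w where w: "0 \<le> w" "w \<le> 1" "x = (1 - w) *\<^sub>R (Q - E) + w *\<^sub>R Q"
    using assms(2) by (auto simp: in_segment)
  have x: "x = Q - complex_of_real (1 - w) * E" using w(3)
    by (simp add: scaleR_conv_of_real algebra_simps)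
  have "w \<noteq> 1"
  proof
    assume "w = 1" then have "x = Q" using x by simp
    then show False using seg_line[OF assms(1)] assms(3) by simp
  qed
  then show ?thesis using w x by (intro exI[of _ "1 - w"]) auto
qed

lemma G1':
  assumes "x \<in> closed_segment J (J + W)" "x \<in> closed_segment Q (Q + E)"
    "det2 (Q - J) W \<noteq> 0"
  shows "\<exists>t. 0 < t \<and> t \<le> 1 \<and> x = Q + complex_of_real t * E"
proof -
  have "x \<in> closed_segment (Q - (-E)) Q" using assms(2) by (simp add: closed_segment_commute)
  from G1[OF assms(1) this assms(3)] show ?thesis by auto
qed

lemma G2:
  assumes "det2 E W \<noteq> 0"
    "0 \<le> det2 (Q - J) W / det2 E W" "det2 (Q - J) W / det2 E W \<le> 1"
    "0 \<le> det2 (Q - J) E / det2 W E" "det2 (Q - J) E / det2 W E \<le> 1"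
  shows "Q - complex_of_real (det2 (Q - J) W / det2 E W) * E \<in> closed_segment J (J + W)
       \<and> Q - complex_of_real (det2 (Q - J) W / det2 E W) * E \<in> closed_segment (Q - E) Q"
proof -
  let ?t = "det2 (Q - J) W / det2 E W" and ?u = "det2 (Q - J) E / det2 W E"
  have c: "Q - J = complex_of_real ?t * E + complex_of_real ?u * W" by (rule cramer[OF assms(1)])
  have "Q - complex_of_real ?t * E - (J + complex_of_real ?u * W) = (Q - J) - (complex_of_real ?t * E + complex_of_real ?u * W)"
    by (simp add: algebra_simps)
  also have "\<dots> = 0" by (rule iffD2[OF right_minus_eq c])
  finally have "Q - complex_of_real ?t * E = J + complex_of_real ?u * W" by simp
  also have "\<dots> = (1 - ?u) *\<^sub>R J + ?u *\<^sub>R (J + W)"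
  proof -
    have "\<And>u. J + complex_of_real u * W = (1-u) *\<^sub>R J + u *\<^sub>R (J+W)"
      by (simp add: scaleR_conv_of_real algebra_simps)
    then show ?thesis by blast
  qed
  finally have A: "Q - complex_of_real ?t * E = (1 - ?u) *\<^sub>R J + ?u *\<^sub>R (J + W)" .
  have B: "Q - complex_of_real ?t * E = (1 - (1 - ?t)) *\<^sub>R (Q - E) + (1 - ?t) *\<^sub>R Q"
  proof -
    have "\<And>t. Q - complex_of_real t * E = (1 - (1 - t)) *\<^sub>R (Q - E) + (1 - t) *\<^sub>R Q"
      by (simp add: scaleR_conv_of_real algebra_simps)
    then show ?thesis by blast
  qed
  show ?thesis unfolding in_segment
  proof
    show "\<exists>u. 0 \<le> u \<and> u \<le> 1 \<and> Q - complex_of_real ?t * E = (1 - u) *\<^sub>R J + u *\<^sub>R (J + W)"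
      using A assms(4,5) by blast
    show "\<exists>u. 0 \<le> u \<and> u \<le> 1 \<and> Q - complex_of_real ?t * E = (1 - u) *\<^sub>R (Q - E) + u *\<^sub>R Q"
      using B assms(2,3) by (intro exI[of _ "1 - ?t"]) simp
  qed
qed




lemma cpos_conv: "CPOS n P \<Longrightarrow> det2 (edgev P i) (P k - P i) \<ge> 0"
  unfolding CPOS_def convex_polygon_def by blast

lemma cpos_adj: "CPOS n P \<Longrightarrow> det2 (edgev P (i - 1)) (edgev P i) \<noteq> 0"
  unfolding CPOS_def by blast

lemma edge_nz: assumes "CPOS n P" shows "edgev P k \<noteq> 0"
  using cpos_adj[OF assms, of k] by auto

lemma adj_pos: assumes "CPOS n P" shows "det2 (edgev P k) (edgev P (k + 1)) > 0"
proof -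
  have "det2 (edgev P k) (P (k + 2) - P k) \<ge> 0" by (rule cpos_conv[OF assms])
  moreover have "P (k + 2) - P k = edgev P k + edgev P (k + 1)"
    by (simp add: edgev_def algebra_simps)
  ultimately have "det2 (edgev P k) (edgev P (k + 1)) \<ge> 0" by simp
  moreover have "det2 (edgev P k) (edgev P (k + 1)) \<noteq> 0"
    using cpos_adj[OF assms, of "k + 1"] by simp
  ultimately show ?thesis by linarith
qed

lemma strict_conv:
  assumes cp: "CPOS n P" and d1: "P m \<noteq> P k" and d2: "P m \<noteq> P (k + 1)"
  shows "det2 (edgev P k) (P m - P k) > 0"
proof (rule ccontr)
  assume "\<not> ?thesis"
  then have z: "det2 (edgev P k) (P m - P k) = 0" using cpos_conv[OF cp, of k m] by linarith
  have ek: "edgev P k \<noteq> 0" by (rule edge_nz[OF cp])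
  obtain s where s: "P m - P k = complex_of_real s * edgev P k"
    using det2_par[of "P m - P k" "edgev P k"] z ek det2_swap by (metis neg_equal_0_iff_equal)
  have pk1: "P (k + 1) = P k + edgev P k" by (simp add: edgev_def)
  have pkm: "P (k - 1) = P k - edgev P (k - 1)" by (simp add: edgev_def)
  have pm1: "P (m - 1) = P m - edgev P (m - 1)" by (simp add: edgev_def)
  have a1: "det2 (edgev P k) (edgev P (k + 1)) > 0" by (rule adj_pos[OF cp])
  have a0: "det2 (edgev P (k - 1)) (edgev P k) > 0" using adj_pos[OF cp, of "k - 1"] by simp
  have "det2 (edgev P (k + 1)) (P m - P (k + 1)) \<ge> 0" by (rule cpos_conv[OF cp])
  also have "P m - P (k + 1) = complex_of_real (s - 1) * edgev P k"
    using s pk1 by (simp add: algebra_simps)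
  finally have "(s - 1) * det2 (edgev P (k + 1)) (edgev P k) \<ge> 0" by (simp del: of_real_diff)
  then have "(s - 1) * det2 (edgev P k) (edgev P (k + 1)) \<le> 0"
    using det2_swap[of "edgev P (k + 1)" "edgev P k"] by simp
  then have sle: "s \<le> 1" using a1 by (simp add: mult_le_0_iff)
  have "det2 (edgev P (k - 1)) (P m - P (k - 1)) \<ge> 0" by (rule cpos_conv[OF cp])
  also have "P m - P (k - 1) = edgev P (k - 1) + complex_of_real s * edgev P k"
    using s pkm by (simp add: algebra_simps)
  finally have "s * det2 (edgev P (k - 1)) (edgev P k) \<ge> 0" by simp
  then have sge: "s \<ge> 0" using a0 by (simp add: zero_le_mult_iff)
  have s0: "s \<noteq> 0" using s d1 by auto
  have s1: "s \<noteq> 1"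
  proof
    assume "s = 1" then have "P m - P k = edgev P k" using s by simp
    then have "P m = P (k + 1)" using pk1 by (metis diff_add_cancel add.commute)
    then show False using d2 by simp
  qed
  have "det2 (edgev P (m - 1)) (P k - P (m - 1)) \<ge> 0" by (rule cpos_conv[OF cp])
  also have "P k - P (m - 1) = edgev P (m - 1) - complex_of_real s * edgev P k"
    using s pm1 by (simp add: algebra_simps)
  finally have b1: "- s * det2 (edgev P (m - 1)) (edgev P k) \<ge> 0" by simp
  have "det2 (edgev P (m - 1)) (P (k + 1) - P (m - 1)) \<ge> 0" by (rule cpos_conv[OF cp])
  also have "P (k + 1) - P (m - 1) = edgev P (m - 1) + complex_of_real (1 - s) * edgev P k"
    using s pm1 pk1 by (simp add: algebra_simps)
  finally have b2: "(1 - s) * det2 (edgev P (m - 1)) (edgev P k) \<ge> 0" by (simp del: of_real_diff)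
  have c1: "det2 (edgev P (m - 1)) (edgev P k) = 0"
  proof -
    have "0 < s" "s < 1" using sle sge s0 s1 by auto
    moreover have "0 < 1 - s" using \<open>s < 1\<close> by simp
    ultimately show ?thesis using b1 b2
      by (auto simp add: zero_le_mult_iff mult_le_0_iff)
  qed
  have "det2 (edgev P m) (P k - P m) \<ge> 0" by (rule cpos_conv[OF cp])
  also have "P k - P m = complex_of_real (- s) * edgev P k" using s by (simp add: algebra_simps)
  finally have b3: "- s * det2 (edgev P m) (edgev P k) \<ge> 0" by (simp del: of_real_minus)
  have "det2 (edgev P m) (P (k + 1) - P m) \<ge> 0" by (rule cpos_conv[OF cp])
  also have "P (k + 1) - P m = complex_of_real (1 - s) * edgev P k" using s pk1 by (simp add: algebra_simps)
  finally have b4: "(1 - s) * det2 (edgev P m) (edgev P k) \<ge> 0" by (simp del: of_real_diff)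
  have c2: "det2 (edgev P m) (edgev P k) = 0"
  proof -
    have "0 < s" "s < 1" using sle sge s0 s1 by auto
    moreover have "0 < 1 - s" using \<open>s < 1\<close> by simp
    ultimately show ?thesis using b3 b4
      by (auto simp add: zero_le_mult_iff mult_le_0_iff)
  qed
  obtain c1' where "edgev P (m - 1) = complex_of_real c1' * edgev P k" using det2_par[OF c1 ek] by blast
  moreover obtain c2' where "edgev P m = complex_of_real c2' * edgev P k" using det2_par[OF c2 ek] by blast
  ultimately have "det2 (edgev P (m - 1)) (edgev P m) = 0" by simp
  then show False using cpos_adj[OF cp, of m] by simp
qed




lemma periodic_int:
  fixes f :: "int \<Rightarrow> 'a"
  assumes "\<And>x. f (x + M) = f x"
  shows "f (x + q * M) = f x"
proof (induct q rule: int_induct[where k=0])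
  case base then show ?case by simp
next
  case (step1 i)
  have "f (x + (i + 1) * M) = f ((x + i * M) + M)" by (simp add: algebra_simps)
  then show ?case using step1 assms by simp
next
  case (step2 i)
  have "f (x + i * M) = f ((x + (i - 1) * M) + M)" by (simp add: algebra_simps)
  then show ?case using step2 assms by simp
qed

lemma cpos_period: "CPOS n P \<Longrightarrow> P (x + 2 * int n) = P x"
  unfolding CPOS_def convex_polygon_def by blast

lemma cpos_inj: "CPOS n P \<Longrightarrow> inj_on P {1 .. 2 * int n}"
  unfolding CPOS_def convex_polygon_def by blast

lemma cpos_n: "CPOS n P \<Longrightarrow> n \<ge> 2"
  unfolding CPOS_def by blast

lemma P_eq_dvd:
  assumes cp: "CPOS n P" and eq: "P a = P b"
  shows "(2 * int n) dvd (a - b)"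
proof -
  define M where "M = 2 * int n"
  have M: "M > 0" using cpos_n[OF cp] unfolding M_def by simp
  define r where "r x = (x - 1) mod M + 1" for x
  have rin: "r x \<in> {1 .. M}" for x unfolding r_def using M
    by (simp add: int_one_le_iff_zero_less pos_mod_sign) (smt (verit) pos_mod_bound)
  have pr: "P (r x) = P x" for x
  proof -
    have "x = r x + ((x - 1) div M) * M" unfolding r_def
      by (metis add.commute add_diff_cancel_left' diff_add_cancel mod_div_mult_eq add.assoc)
    then have "P x = P (r x + ((x - 1) div M) * M)" by simp
    also have "\<dots> = P (r x)" by (rule periodic_int) (use cpos_period[OF cp] M_def in auto)
    finally show ?thesis by simp
  qed
  have "P (r a) = P (r b)" using pr eq by simp
  then have "r a = r b" using cpos_inj[OF cp] rin unfolding M_def inj_on_def by blast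
  then have "(a - 1) mod M = (b - 1) mod M" unfolding r_def by simp
  then have "M dvd (a - 1) - (b - 1)" by (simp add: mod_eq_dvd_iff)
  then show ?thesis unfolding M_def by simp
qed

lemma P_ne:
  assumes cp: "CPOS n P" and "\<not> (2 * int n) dvd (a - b)"
  shows "P a \<noteq> P b"
  using P_eq_dvd[OF cp] assms(2) by blast

lemma opp_par: "CPOS n P \<Longrightarrow> \<exists>mu. edgev P (k + int n) = complex_of_real mu * edgev P k"
  using det2_par[of "edgev P (k + int n)" "edgev P k"] edge_nz[of n P k]
  unfolding CPOS_def by blast

lemma mult_period:
  fixes e :: "int \<Rightarrow> complex"
  assumes "\<And>x. \<exists>c::real. c \<noteq> 0 \<and> e (x + M) = complex_of_real c * e x"
  shows "\<exists>c::real. c \<noteq> 0 \<and> e (x + q * M) = complex_of_real c * e x"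
proof (induct q rule: int_induct[where k=0])
  case base then show ?case by (intro exI[of _ 1]) simp
next
  case (step1 i)
  then obtain c where c: "c \<noteq> 0" "e (x + i * M) = complex_of_real c * e x" by blast
  obtain d where d: "d \<noteq> 0" "e ((x + i * M) + M) = complex_of_real d * e (x + i * M)" using assms by blast
  have "e (x + (i + 1) * M) = e ((x + i * M) + M)" by (simp add: algebra_simps)
  then show ?case using c d by (intro exI[of _ "d * c"]) simp
next
  case (step2 i)
  then obtain c where c: "c \<noteq> 0" "e (x + i * M) = complex_of_real c * e x" by blast
  obtain d where d: "d \<noteq> 0" "e ((x + (i - 1) * M) + M) = complex_of_real d * e (x + (i - 1) * M)" using assms by blast
  have "e (x + i * M) = e ((x + (i - 1) * M) + M)" by (simp add: algebra_simps)
  then have "e (x + (i - 1) * M) = complex_of_real (c / d) * e x" using c d by (simp add: field_simps)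
  then show ?case using c d by (intro exI[of _ "c / d"]) simp
qed

lemma nonpar:
  assumes cp: "CPOS n P" and nd: "\<not> int n dvd (a - b)"
  shows "det2 (edgev P a) (edgev P b) \<noteq> 0"
proof -
  define N where "N = int n"
  have N: "N > 0" using cpos_n[OF cp] unfolding N_def by simp
  have step: "\<exists>c::real. c \<noteq> 0 \<and> edgev P (x + N) = complex_of_real c * edgev P x" for x
  proof -
    obtain mu where mu: "edgev P (x + N) = complex_of_real mu * edgev P x"
      using opp_par[OF cp] unfolding N_def by blast
    have "mu \<noteq> 0" using mu edge_nz[OF cp, of "x + N"] by auto
    then show ?thesis using mu by blast
  qed
  define r where "r x = (x - 1) mod N + 1" for x
  have rin: "1 \<le> r x \<and> r x \<le> N" for x unfolding r_def using N
    by (simp add: int_one_le_iff_zero_less pos_mod_sign) (smt (verit) pos_mod_bound)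
  have er: "\<exists>c::real. c \<noteq> 0 \<and> edgev P x = complex_of_real c * edgev P (r x)" for x
  proof -
    have "x = r x + ((x - 1) div N) * N" unfolding r_def
      by (metis add.commute add_diff_cancel_left' diff_add_cancel mod_div_mult_eq add.assoc)
    moreover have "\<exists>c::real. c \<noteq> 0 \<and> edgev P (r x + ((x - 1) div N) * N) = complex_of_real c * edgev P (r x)"
      by (rule mult_period) (use step in auto)
    ultimately show ?thesis by metis
  qed
  have rne: "r a \<noteq> r b"
  proof
    assume "r a = r b"
    then have "(a - 1) mod N = (b - 1) mod N" unfolding r_def by simp
    then have "N dvd (a - 1) - (b - 1)" by (simp add: mod_eq_dvd_iff)
    then show False using nd unfolding N_def by simp
  qed
  have pos: "det2 (edgev P (r a)) (edgev P (r b)) \<noteq> 0"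
  proof (cases "r a < r b")
    case True
    then have "det2 (edgev P (r a)) (edgev P (r b)) > 0" using cp rin unfolding CPOS_def N_def by blast
    then show ?thesis by simp
  next
    case False
    then have "r b < r a" using rne by simp
    then have "det2 (edgev P (r b)) (edgev P (r a)) > 0" using cp rin unfolding CPOS_def N_def by blast
    then show ?thesis using det2_swap by (metis neg_0_less_iff_less less_irrefl)
  qed
  obtain ca where ca: "ca \<noteq> 0" "edgev P a = complex_of_real ca * edgev P (r a)" using er by blast
  obtain cb where cb: "cb \<noteq> 0" "edgev P b = complex_of_real cb * edgev P (r b)" using er by blast
  show ?thesis using ca cb pos by simp
qed




lemma ev_gt: "isCont (f::real\<Rightarrow>real) x \<Longrightarrow> c < f x \<Longrightarrow> eventually (\<lambda>y. c < f y) (at x)"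
  unfolding isCont_def using order_tendstoD(1)[of f "f x" "at x" c] by simp
lemma ev_lt: "isCont (f::real\<Rightarrow>real) x \<Longrightarrow> f x < c \<Longrightarrow> eventually (\<lambda>y. f y < c) (at x)"
  unfolding isCont_def using order_tendstoD(2)[of f "f x" "at x" c] by simp

lemma dvd_half:
  fixes N x j :: int
  assumes "N dvd (x - j)"
  shows "(2 * N) dvd (x - j) \<or> (2 * N) dvd (x + N - j)"
proof -
  obtain k where k: "x - j = N * k" using assms by (auto simp: dvd_def)
  show ?thesis
  proof (cases "even k")
    case True
    then obtain m where "k = 2 * m" by (auto elim: evenE)
    then have "x - j = (2 * N) * m" using k by simp
    then show ?thesis unfolding dvd_def by blast
  next
    case False
    then obtain m where "k = 2 * m + 1" by (auto elim: oddE)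
    then have "x + N - j = (2 * N) * (m + 1)" using k by (simp add: algebra_simps)
    then show ?thesis unfolding dvd_def by blast
  qed
qed

lemma not_dvd_small: "0 < (x::int) \<Longrightarrow> x < M \<Longrightarrow> \<not> M dvd x"
  using zdvd_imp_le[of M x] by auto

lemma pos_from_prod:
  fixes A B C X Y :: real
  assumes "0 < A" "0 < B" "0 < C" "A * B * C = X * Y^2"
  shows "0 < X"
proof -
  have "0 < X * Y^2" using assms by (metis mult_pos_pos)
  moreover have "Y^2 \<ge> 0" by simp
  ultimately show ?thesis by (auto simp: zero_less_mult_iff)
qed




theorem mainTheorem7:
  fixes n :: nat and P :: "int \<Rightarrow> complex" and i j :: int and l0 :: real
  assumes cpos: "CPOS n P"
    and j_ne: "j mod (2 * int n) \<notin> {(i - 1) mod (2 * int n), i mod (2 * int n),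
                  (i + int n - 1) mod (2 * int n), (i + int n) mod (2 * int n)}"
    and f_ne: "fcurv n P i l0 \<noteq> 0"
    and on_edge: "eqd n P l0 i \<in> open_segment (eqd n P l0 j) (eqd n P l0 (j + 1))"
    and transv: "deriv (\<lambda>l. det2 (eqd n P l i - eqd n P l j) (eqd_edge n P l j)) l0 \<noteq> 0"
  shows "(\<exists>\<epsilon>>0. \<exists>s\<in>{-1, 1::real}. \<forall>l. 0 < \<bar>l - l0\<bar> \<and> \<bar>l - l0\<bar> < \<epsilon> \<longrightarrow>
            (closed_segment (eqd n P l j) (eqd n P l (j + 1)) \<inter>
               closed_segment (eqd n P l (i - 1)) (eqd n P l i))
            \<union> (closed_segment (eqd n P l j) (eqd n P l (j + 1)) \<inter>
               closed_segment (eqd n P l i) (eqd n P l (i + 1)))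
            \<subseteq> diag_halfplane n P i s)
         \<longleftrightarrow> fcurv n P i l0 < 0"
proof -
  have n2: "n \<ge> 2" using cpos_n[OF cpos] .
  have "\<forall>k. \<exists>mu. edgev P (k + int n) = complex_of_real mu * edgev P k" using opp_par[OF cpos] by blast
  then obtain mu where mu: "\<And>k. edgev P (k + int n) = complex_of_real (mu k) * edgev P k" by metis
  define a where "a k l = 1 - l + l * mu k" for k l
  have EE: "eqd_edge n P l k = complex_of_real (a k l) * edgev P k" for l k
  proof -
    have "eqd_edge n P l k = edgev P k + complex_of_real l * (edgev P (k + int n) - edgev P k)"
      by (simp add: eqd_edge_def eqd_def edgev_def algebra_simps)
    then show ?thesis by (simp add: mu a_def algebra_simps)
  qed
  have eqd_im1: "eqd n P l (i - 1) = eqd n P l i - eqd_edge n P l (i - 1)" for l by (simp add: eqd_edge_def)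
  have eqd_ip1: "eqd n P l (i + 1) = eqd n P l i + eqd_edge n P l i" for l by (simp add: eqd_edge_def)
  have eqd_jp1: "eqd n P l (j + 1) = eqd n P l j + eqd_edge n P l j" for l by (simp add: eqd_edge_def)
  define v where "v = P (i + int n) - P i"
  have Qf: "eqd n P l i = P i + complex_of_real l * v" for l by (simp add: eqd_def v_def)
  have FC: "fcurv n P i l = a (i-1) l * a i l * det2 (edgev P (i-1)) (edgev P i)" for l
    by (simp add: fcurv_def EE)
  have cc0: "det2 (edgev P (i-1)) (edgev P i) > 0" using adj_pos[OF cpos, of "i-1"] by simp
  have nd: "\<not> (2 * int n) dvd x" if "0 < x" "x < 2 * int n" for x using not_dvd_small that by blast
  have d1: "det2 v (edgev P (i-1)) < 0"
  proof -
    have "det2 (edgev P (i-1)) (P (i + int n) - P (i-1)) > 0"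
      apply (rule strict_conv[OF cpos])
      using P_ne[OF cpos, of "i + int n" "i-1"] P_ne[OF cpos, of "i + int n" "i"] nd[of "int n + 1"] nd[of "int n"] n2
      by (auto simp: algebra_simps)
    moreover have "P (i + int n) - P (i-1) = v + edgev P (i-1)" by (simp add: v_def edgev_def)
    ultimately show ?thesis using det2_swap[of v "edgev P (i-1)"] by simp
  qed
  have d2: "det2 v (edgev P i) < 0"
  proof -
    have "det2 (edgev P i) (P (i + int n) - P i) > 0"
      apply (rule strict_conv[OF cpos])
      using P_ne[OF cpos, of "i + int n" "i"] P_ne[OF cpos, of "i + int n" "i + 1"] nd[of "int n - 1"] nd[of "int n"] n2
      by (auto simp: algebra_simps)
    then show ?thesis using det2_swap[of v "edgev P i"] by (simp add: v_def)
  qed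
  have cj1: "det2 (edgev P (i-1)) (edgev P j) \<noteq> 0"
  proof (rule nonpar[OF cpos])
    show "\<not> int n dvd (i - 1 - j)"
    proof
      assume "int n dvd (i - 1 - j)"
      from dvd_half[OF this] have "(2*int n) dvd (i - 1 - j) \<or> (2*int n) dvd (i + int n - 1 - j)"
        by (simp add: algebra_simps)
      then have "(i - 1) mod (2*int n) = j mod (2*int n) \<or> (i + int n - 1) mod (2*int n) = j mod (2*int n)"
        by (simp add: mod_eq_dvd_iff)
      then show False using j_ne by auto
    qed
  qed
  have cj2: "det2 (edgev P i) (edgev P j) \<noteq> 0"
  proof (rule nonpar[OF cpos])
    show "\<not> int n dvd (i - j)"
    proof
      assume "int n dvd (i - j)"
      from dvd_half[OF this] have "(2*int n) dvd (i - j) \<or> (2*int n) dvd (i + int n - j)" .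
      then have "i mod (2*int n) = j mod (2*int n) \<or> (i + int n) mod (2*int n) = j mod (2*int n)"
        by (simp add: mod_eq_dvd_iff)
      then show False using j_ne by auto
    qed
  qed
  define X0 where "X0 = P i - P j"
  define X1 where "X1 = v - (P (j + int n) - P j)"
  define Y0 where "Y0 = edgev P j"
  define Y1 where "Y1 = edgev P (j + int n) - edgev P j"
  have QJ: "eqd n P l i - eqd n P l j = X0 + complex_of_real l * X1" for l
    by (simp add: eqd_def X0_def X1_def v_def algebra_simps)
  have WW: "eqd_edge n P l j = Y0 + complex_of_real l * Y1" for l
    by (simp add: eqd_edge_def eqd_def Y0_def Y1_def edgev_def algebra_simps)
  define k0 where "k0 = det2 X0 Y0"
  define k1 where "k1 = det2 X0 Y1 + det2 X1 Y0"
  define k2 where "k2 = det2 X1 Y1"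
  define g where "g l = det2 (eqd n P l i - eqd n P l j) (eqd_edge n P l j)" for l
  have gpoly: "g l = k0 + k1 * l + k2 * l^2" for l
    unfolding g_def QJ WW k0_def k1_def k2_def by (simp add: algebra_simps power2_eq_square)
  have gfun: "(\<lambda>l. det2 (eqd n P l i - eqd n P l j) (eqd_edge n P l j)) = (\<lambda>l. k0 + k1*l + k2*l^2)"
    using gpoly unfolding g_def by auto
  have "((\<lambda>l. k0 + k1*l + k2*l^2) has_real_derivative (k1 + 2*k2*l0)) (at l0)"
    by (auto intro!: derivative_eq_intros)
  then have gd: "deriv (\<lambda>l. det2 (eqd n P l i - eqd n P l j) (eqd_edge n P l j)) l0 = k1 + 2*k2*l0"
    unfolding gfun by (rule DERIV_imp_deriv)
  define g' where "g' = k1 + 2*k2*l0"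
  have g'nz: "g' \<noteq> 0" using transv gd g'_def by simp
  from on_edge obtain u0 where u0: "0 < u0" "u0 < 1" and Wnz: "eqd n P l0 j \<noteq> eqd n P l0 (j+1)"
    and Q0: "eqd n P l0 i = (1 - u0) *\<^sub>R eqd n P l0 j + u0 *\<^sub>R eqd n P l0 (j+1)"
    unfolding in_segment by blast
  have QJ0: "eqd n P l0 i - eqd n P l0 j = complex_of_real u0 * eqd_edge n P l0 j"
  proof -
    have "eqd n P l0 i - eqd n P l0 j = u0 *\<^sub>R eqd_edge n P l0 j"
      using Q0 unfolding eqd_jp1 by (simp add: algebra_simps)
    then show ?thesis by (simp add: scaleR_conv_of_real)
  qed
  have g0: "g l0 = 0" unfolding g_def QJ0 by simp
  have W0: "eqd_edge n P l0 j \<noteq> 0" using Wnz eqd_jp1 by auto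
  have aj0: "a j l0 \<noteq> 0" using W0 EE by auto
  have a10: "a (i-1) l0 \<noteq> 0" and a20: "a i l0 \<noteq> 0" using f_ne FC by auto
  define h where "h l = k1 + k2 * (l + l0)" for l
  have gfac: "g l = (l - l0) * h l" for l
  proof -
    have "g l = g l - g l0" using g0 by simp
    also have "\<dots> = (l - l0) * h l" unfolding gpoly h_def by (simp add: algebra_simps power2_eq_square)
    finally show ?thesis .
  qed
  have h0: "h l0 = g'" unfolding h_def g'_def by simp
  define E1 where "E1 l = eqd_edge n P l (i-1)" for l
  define E2 where "E2 l = eqd_edge n P l i" for l
  define QJl where "QJl l = eqd n P l i - eqd n P l j" for l
  define Wl where "Wl l = eqd_edge n P l j" for l
  define t1 where "t1 l = det2 (QJl l) (Wl l) / det2 (E1 l) (Wl l)" for l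
  define u1 where "u1 l = det2 (QJl l) (E1 l) / det2 (Wl l) (E1 l)" for l
  define t2 where "t2 l = det2 (QJl l) (Wl l) / det2 (- E2 l) (Wl l)" for l
  define u2 where "u2 l = det2 (QJl l) (- E2 l) / det2 (Wl l) (- E2 l)" for l
  have ca: "isCont (a k) x" for k x unfolding a_def by (intro continuous_intros)
  have cQJ: "isCont QJl x" for x unfolding QJl_def QJ by (intro continuous_intros)
  have cW: "isCont Wl x" for x unfolding Wl_def WW by (intro continuous_intros)
  have cE1: "isCont E1 x" for x unfolding E1_def EE a_def by (intro continuous_intros)
  have cE2: "isCont E2 x" for x unfolding E2_def EE a_def by (intro continuous_intros)
  have cj1': "det2 (edgev P j) (edgev P (i-1)) \<noteq> 0" using cj1 det2_swap by (metis neg_equal_0_iff_equal)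
  have cj2': "det2 (edgev P j) (edgev P i) \<noteq> 0" using cj2 det2_swap by (metis neg_equal_0_iff_equal)
  have D1: "det2 (E1 l) (Wl l) = a (i-1) l * a j l * det2 (edgev P (i-1)) (edgev P j)" for l
    unfolding E1_def Wl_def EE by simp
  have D1': "det2 (Wl l) (E1 l) = a (i-1) l * a j l * det2 (edgev P j) (edgev P (i-1))" for l
    unfolding E1_def Wl_def EE by simp
  have D2: "det2 (- E2 l) (Wl l) = - (a i l * a j l * det2 (edgev P i) (edgev P j))" for l
    unfolding E2_def Wl_def EE by simp
  have D2': "det2 (Wl l) (- E2 l) = - (a i l * a j l * det2 (edgev P j) (edgev P i))" for l
    unfolding E2_def Wl_def EE by simp
  have ct1: "isCont t1 l0" unfolding t1_def
    by (intro continuous_intros cQJ cW cE1) (use D1 a10 aj0 cj1 in simp)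
  have cu1: "isCont u1 l0" unfolding u1_def
    by (intro continuous_intros cQJ cW cE1) (use D1' a10 aj0 cj1' in simp)
  have ct2: "isCont t2 l0" unfolding t2_def
    by (intro continuous_intros cQJ cW cE2) (use D2 a20 aj0 cj2 in simp)
  have cu2: "isCont u2 l0" unfolding u2_def
    by (intro continuous_intros cQJ cW cE2) (use D2' a20 aj0 cj2' in simp)
  have QJl0: "QJl l0 = complex_of_real u0 * Wl l0" unfolding QJl_def Wl_def QJ0 ..
  have t10: "t1 l0 = 0" unfolding t1_def QJl0 by simp
  have t20: "t2 l0 = 0" unfolding t2_def QJl0 by simp
  have u10: "u1 l0 = u0" unfolding u1_def QJl0 using D1' a10 aj0 cj1' by simp
  have u20: "u2 l0 = u0" unfolding u2_def QJl0 using D2' a20 aj0 cj2' by simp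
  have ch: "isCont (\<lambda>l. h l * g') l0" unfolding h_def by (intro continuous_intros)
  have ca2: "isCont (\<lambda>l. a k l * a k l0) l0" for k using ca by (intro continuous_intros) auto
  have "eventually (\<lambda>l. 0 < h l * g') (at l0)" by (rule ev_gt[OF ch]) (use h0 g'nz in \<open>auto simp: zero_less_mult_iff linorder_neq_iff\<close>)
  moreover have "eventually (\<lambda>l. 0 < a (i-1) l * a (i-1) l0) (at l0)" by (rule ev_gt[OF ca2]) (use a10 in \<open>auto simp: zero_less_mult_iff linorder_neq_iff\<close>)
  moreover have "eventually (\<lambda>l. 0 < a i l * a i l0) (at l0)" by (rule ev_gt[OF ca2]) (use a20 in \<open>auto simp: zero_less_mult_iff linorder_neq_iff\<close>)
  moreover have "eventually (\<lambda>l. 0 < a j l * a j l0) (at l0)" by (rule ev_gt[OF ca2]) (use aj0 in \<open>auto simp: zero_less_mult_iff linorder_neq_iff\<close>)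
  moreover have "eventually (\<lambda>l. t1 l < 1) (at l0)" by (rule ev_lt[OF ct1]) (use t10 in simp)
  moreover have "eventually (\<lambda>l. t2 l < 1) (at l0)" by (rule ev_lt[OF ct2]) (use t20 in simp)
  moreover have "eventually (\<lambda>l. 0 < u1 l) (at l0)" by (rule ev_gt[OF cu1]) (use u10 u0 in simp)
  moreover have "eventually (\<lambda>l. u1 l < 1) (at l0)" by (rule ev_lt[OF cu1]) (use u10 u0 in simp)
  moreover have "eventually (\<lambda>l. 0 < u2 l) (at l0)" by (rule ev_gt[OF cu2]) (use u20 u0 in simp)
  moreover have "eventually (\<lambda>l. u2 l < 1) (at l0)" by (rule ev_lt[OF cu2]) (use u20 u0 in simp)
  ultimately have "eventually (\<lambda>l. 0 < h l * g' \<and> 0 < a (i-1) l * a (i-1) l0 \<and> 0 < a i l * a i l0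
      \<and> 0 < a j l * a j l0 \<and> t1 l < 1 \<and> t2 l < 1 \<and> 0 < u1 l \<and> u1 l < 1 \<and> 0 < u2 l \<and> u2 l < 1) (at l0)"
    by (simp add: eventually_conj_iff)
  then obtain d where d: "d > 0" and dP: "\<And>l. l \<noteq> l0 \<Longrightarrow> dist l l0 < d \<Longrightarrow>
      0 < h l * g' \<and> 0 < a (i-1) l * a (i-1) l0 \<and> 0 < a i l * a i l0
      \<and> 0 < a j l * a j l0 \<and> t1 l < 1 \<and> t2 l < 1 \<and> 0 < u1 l \<and> u1 l < 1 \<and> 0 < u2 l \<and> u2 l < 1"
    unfolding eventually_at by auto
  have gl: "det2 (QJl l) (Wl l) = g l" for l unfolding QJl_def Wl_def g_def ..
  have hp: "det2 v (eqd n P l i - complex_of_real t * E1 l - P i) = - t * a (i-1) l * det2 v (edgev P (i-1))" for l t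
    unfolding Qf E1_def EE by simp
  have hp2: "det2 v (eqd n P l i + complex_of_real t * E2 l - P i) = t * a i l * det2 v (edgev P i)" for l t
    unfolding Qf E2_def EE by simp
  have Gm: "closed_segment (eqd n P l j) (eqd n P l (j + 1)) \<inter> closed_segment (eqd n P l (i - 1)) (eqd n P l i)
      = closed_segment (eqd n P l j) (eqd n P l j + Wl l) \<inter> closed_segment (eqd n P l i - E1 l) (eqd n P l i)" for l
    unfolding eqd_jp1 eqd_im1 Wl_def E1_def ..
  have Gp: "closed_segment (eqd n P l j) (eqd n P l (j + 1)) \<inter> closed_segment (eqd n P l i) (eqd n P l (i + 1))
      = closed_segment (eqd n P l j) (eqd n P l j + Wl l) \<inter> closed_segment (eqd n P l i) (eqd n P l i + E2 l)" for l
    unfolding eqd_jp1 eqd_ip1 Wl_def E2_def ..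
  have HP: "x \<in> diag_halfplane n P i s \<longleftrightarrow> 0 < s * det2 v (x - P i)" for x s
    unfolding diag_halfplane_def v_def by simp
  show ?thesis
  proof
    assume "\<exists>\<epsilon>>0. \<exists>s\<in>{-1, 1::real}. \<forall>l. 0 < \<bar>l - l0\<bar> \<and> \<bar>l - l0\<bar> < \<epsilon> \<longrightarrow>
            (closed_segment (eqd n P l j) (eqd n P l (j + 1)) \<inter>
               closed_segment (eqd n P l (i - 1)) (eqd n P l i))
            \<union> (closed_segment (eqd n P l j) (eqd n P l (j + 1)) \<inter>
               closed_segment (eqd n P l i) (eqd n P l (i + 1)))
            \<subseteq> diag_halfplane n P i s"
    then obtain \<epsilon> s where ep: "\<epsilon> > 0" and s: "s \<in> {-1, 1::real}" and H: "\<And>l. 0 < \<bar>l - l0\<bar> \<Longrightarrow> \<bar>l - l0\<bar> < \<epsilon> \<Longrightarrow>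
            (closed_segment (eqd n P l j) (eqd n P l (j + 1)) \<inter>
               closed_segment (eqd n P l (i - 1)) (eqd n P l i))
            \<union> (closed_segment (eqd n P l j) (eqd n P l (j + 1)) \<inter>
               closed_segment (eqd n P l i) (eqd n P l (i + 1)))
            \<subseteq> diag_halfplane n P i s" by blast
    show "fcurv n P i l0 < 0"
    proof (rule ccontr)
      assume "\<not> fcurv n P i l0 < 0"
      then have "fcurv n P i l0 > 0" using f_ne by simp
      then have a12: "0 < a (i-1) l0 * a i l0" using FC[of l0] cc0 by (auto simp: zero_less_mult_iff)
      define \<delta> where "\<delta> = min d \<epsilon> / 2"
      have \<delta>: "0 < \<delta>" "\<delta> < d" "\<delta> < \<epsilon>" unfolding \<delta>_def using d ep by auto
      have pick: "\<exists>l. 0 < \<bar>l - l0\<bar> \<and> \<bar>l - l0\<bar> < \<epsilon> \<and> l \<noteq> l0 \<and> dist l l0 < d \<and> 0 < g l * Dx l"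
        if Dx0: "Dx l0 \<noteq> 0" and Dxp: "\<And>l. l \<noteq> l0 \<Longrightarrow> dist l l0 < d \<Longrightarrow> 0 < Dx l * Dx l0" for Dx
      proof -
        define l1 where "l1 = (if 0 < g' * Dx l0 then l0 + \<delta> else l0 - \<delta>)"
        have l1: "\<bar>l1 - l0\<bar> = \<delta>" "l1 \<noteq> l0" "dist l1 l0 < d" unfolding l1_def dist_real_def using \<delta> by auto
        have X: "0 < (l1 - l0) * g' * Dx l0"
        proof (cases "0 < g' * Dx l0")
          case True then show ?thesis unfolding l1_def using \<delta> by (simp add: mult.assoc)
        next
          case False
          then have "g' * Dx l0 < 0" using g'nz Dx0 by (simp add: linorder_neq_iff mult_less_0_iff zero_less_mult_iff) (meson linorder_neqE_linordered_idom)
          then show ?thesis unfolding l1_def using \<delta> False by (simp add: mult.assoc mult_pos_neg)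
        qed
        have Y: "0 < h l1 * g'" using dP[OF l1(2,3)] by blast
        have Z: "0 < Dx l1 * Dx l0" using Dxp[OF l1(2,3)] .
        have "((l1 - l0) * g' * Dx l0) * (h l1 * g') * (Dx l1 * Dx l0) = (g l1 * Dx l1) * (g' * Dx l0)^2"
          unfolding gfac by (simp add: algebra_simps power2_eq_square)
        then have "0 < g l1 * Dx l1" using pos_from_prod[OF X Y Z] by blast
        then show ?thesis using l1 \<delta> by (intro exI[of _ l1]) auto
      qed
      have c1sq: "0 < det2 (edgev P (i-1)) (edgev P j) * det2 (edgev P (i-1)) (edgev P j)"
        using cj1 by (auto simp: zero_less_mult_iff linorder_neq_iff)
      have c2sq: "0 < det2 (edgev P i) (edgev P j) * det2 (edgev P i) (edgev P j)"
        using cj2 by (auto simp: zero_less_mult_iff linorder_neq_iff)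
      obtain l1 where l1: "0 < \<bar>l1 - l0\<bar>" "\<bar>l1 - l0\<bar> < \<epsilon>" "l1 \<noteq> l0" "dist l1 l0 < d"
          and gD1: "0 < g l1 * det2 (E1 l1) (Wl l1)"
      proof -
        have "\<exists>l. 0 < \<bar>l - l0\<bar> \<and> \<bar>l - l0\<bar> < \<epsilon> \<and> l \<noteq> l0 \<and> dist l l0 < d \<and> 0 < g l * det2 (E1 l) (Wl l)"
        proof (rule pick)
          show "det2 (E1 l0) (Wl l0) \<noteq> 0" using D1 a10 aj0 cj1 by simp
          fix l assume "l \<noteq> l0" "dist l l0 < d"
          from dP[OF this] have "0 < a (i-1) l * a (i-1) l0" "0 < a j l * a j l0" by auto
          moreover have "det2 (E1 l) (Wl l) * det2 (E1 l0) (Wl l0) = (a (i-1) l * a (i-1) l0) * (a j l * a j l0)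
              * (det2 (edgev P (i-1)) (edgev P j) * det2 (edgev P (i-1)) (edgev P j))"
            unfolding D1 by (simp add: algebra_simps)
          ultimately show "0 < det2 (E1 l) (Wl l) * det2 (E1 l0) (Wl l0)" using c1sq by simp
        qed
        then show ?thesis using that by blast
      qed
      obtain l2 where l2: "0 < \<bar>l2 - l0\<bar>" "\<bar>l2 - l0\<bar> < \<epsilon>" "l2 \<noteq> l0" "dist l2 l0 < d"
          and gD2: "0 < g l2 * det2 (- E2 l2) (Wl l2)"
      proof -
        have "\<exists>l. 0 < \<bar>l - l0\<bar> \<and> \<bar>l - l0\<bar> < \<epsilon> \<and> l \<noteq> l0 \<and> dist l l0 < d \<and> 0 < g l * det2 (- E2 l) (Wl l)"
        proof (rule pick)
          show "det2 (- E2 l0) (Wl l0) \<noteq> 0" using D2 a20 aj0 cj2 by simp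
          fix l assume "l \<noteq> l0" "dist l l0 < d"
          from dP[OF this] have "0 < a i l * a i l0" "0 < a j l * a j l0" by auto
          moreover have "det2 (- E2 l) (Wl l) * det2 (- E2 l0) (Wl l0) = (a i l * a i l0) * (a j l * a j l0)
              * (det2 (edgev P i) (edgev P j) * det2 (edgev P i) (edgev P j))"
            unfolding D2 by (simp add: algebra_simps)
          ultimately show "0 < det2 (- E2 l) (Wl l) * det2 (- E2 l0) (Wl l0)" using c2sq by simp
        qed
        then show ?thesis using that by blast
      qed
      have dP1: "0 < a (i-1) l1 * a (i-1) l0" "t1 l1 < 1" "0 < u1 l1" "u1 l1 < 1" using dP[OF l1(3,4)] by auto
      have D1nz: "det2 (E1 l1) (Wl l1) \<noteq> 0" using gD1 by auto
      have t1pos: "0 < t1 l1" unfolding t1_def gl using gD1 by (simp add: zero_less_divide_iff zero_less_mult_iff)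
      have "eqd n P l1 i - complex_of_real (t1 l1) * E1 l1 \<in> closed_segment (eqd n P l1 j) (eqd n P l1 j + Wl l1)
          \<and> eqd n P l1 i - complex_of_real (t1 l1) * E1 l1 \<in> closed_segment (eqd n P l1 i - E1 l1) (eqd n P l1 i)"
        using G2[of "E1 l1" "Wl l1" "eqd n P l1 i" "eqd n P l1 j"] D1nz t1pos dP1 unfolding t1_def u1_def QJl_def by simp
      then have "eqd n P l1 i - complex_of_real (t1 l1) * E1 l1 \<in> diag_halfplane n P i s"
        using H[OF l1(1,2)] unfolding Gm by blast
      then have e1: "0 < s * (- t1 l1 * a (i-1) l1 * det2 v (edgev P (i-1)))" unfolding HP hp .
      have e2: "s * (- t1 l1 * a (i-1) l1 * det2 v (edgev P (i-1))) = (s * a (i-1) l1) * (t1 l1 * (- det2 v (edgev P (i-1))))"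
        by (simp add: algebra_simps)
      have e3: "0 < t1 l1 * (- det2 v (edgev P (i-1)))" using t1pos d1 by (simp add: mult_pos_neg)
      have sa1: "0 < s * a (i-1) l1" using e1 unfolding e2 using e3 zero_less_mult_pos2 by blast
      have dP2: "0 < a i l2 * a i l0" "t2 l2 < 1" "0 < u2 l2" "u2 l2 < 1" using dP[OF l2(3,4)] by auto
      have D2nz: "det2 (- E2 l2) (Wl l2) \<noteq> 0" using gD2 by auto
      have t2pos: "0 < t2 l2" unfolding t2_def gl using gD2 by (simp add: zero_less_divide_iff zero_less_mult_iff divide_less_0_iff mult_less_0_iff)
      have "eqd n P l2 i - complex_of_real (t2 l2) * (- E2 l2) \<in> closed_segment (eqd n P l2 j) (eqd n P l2 j + Wl l2)
          \<and> eqd n P l2 i - complex_of_real (t2 l2) * (- E2 l2) \<in> closed_segment (eqd n P l2 i - (- E2 l2)) (eqd n P l2 i)"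
        using G2[of "- E2 l2" "Wl l2" "eqd n P l2 i" "eqd n P l2 j"] D2nz t2pos dP2
        unfolding t2_def u2_def QJl_def by simp
      then have "eqd n P l2 i + complex_of_real (t2 l2) * E2 l2 \<in> closed_segment (eqd n P l2 j) (eqd n P l2 j + Wl l2)
          \<inter> closed_segment (eqd n P l2 i) (eqd n P l2 i + E2 l2)"
        by (simp add: closed_segment_commute)
      then have "eqd n P l2 i + complex_of_real (t2 l2) * E2 l2 \<in> diag_halfplane n P i s"
        using H[OF l2(1,2)] unfolding Gp by blast
      then have e1: "0 < s * (t2 l2 * a i l2 * det2 v (edgev P i))" unfolding HP hp2 .
      have e2: "s * (t2 l2 * a i l2 * det2 v (edgev P i)) = (- (s * a i l2)) * (t2 l2 * (- det2 v (edgev P i)))"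
        by (simp add: algebra_simps)
      have e3: "0 < t2 l2 * (- det2 v (edgev P i))" using t2pos d2 by (simp add: mult_pos_neg)
      have sa2: "0 < - (s * a i l2)" using e1 unfolding e2 using e3 zero_less_mult_pos2 by blast
      have m: "(s * a (i-1) l1) * (s * a i l2) < 0" using sa1 sa2 by (simp add: mult_pos_neg)
      have "(s * a (i-1) l1) * (s * a i l2) = a (i-1) l1 * a i l2" using s by auto
      then have neg: "a (i-1) l1 * a i l2 < 0" using m by linarith
      have "(a (i-1) l1 * a (i-1) l0) * (a i l2 * a i l0) * (a (i-1) l0 * a i l0) = (a (i-1) l1 * a i l2) * (a (i-1) l0 * a i l0)^2"
        by (simp add: algebra_simps power2_eq_square)
      from pos_from_prod[OF dP1(1) dP2(1) a12 this] neg show False by simp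
    qed
  next
    assume fneg: "fcurv n P i l0 < 0"
    show "\<exists>\<epsilon>>0. \<exists>s\<in>{-1, 1::real}. \<forall>l. 0 < \<bar>l - l0\<bar> \<and> \<bar>l - l0\<bar> < \<epsilon> \<longrightarrow>
            (closed_segment (eqd n P l j) (eqd n P l (j + 1)) \<inter>
               closed_segment (eqd n P l (i - 1)) (eqd n P l i))
            \<union> (closed_segment (eqd n P l j) (eqd n P l (j + 1)) \<inter>
               closed_segment (eqd n P l i) (eqd n P l (i + 1)))
            \<subseteq> diag_halfplane n P i s"
    proof -
      have "a (i-1) l0 * a i l0 * det2 (edgev P (i-1)) (edgev P i) < 0" using fneg FC[of l0] by simp
      then have a12: "a (i-1) l0 * a i l0 < 0" using cc0 by (auto simp: mult_less_0_iff)
      define s where "s = (if 0 < a (i-1) l0 then 1 else -1::real)"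
      have sin: "s \<in> {-1, 1}" unfolding s_def by auto
      have sgn: "0 < s * a (i-1) l \<and> s * a i l < 0" if "0 < a (i-1) l * a (i-1) l0" "0 < a i l * a i l0" for l
      proof (cases "0 < a (i-1) l0")
        case True
        then have "a i l0 < 0" using a12 by (simp add: mult_less_0_iff)
        then show ?thesis using True that unfolding s_def by (auto simp: zero_less_mult_iff)
      next
        case False
        then have "a (i-1) l0 < 0" using a10 by simp
        then have "a i l0 > 0" using a12 by (simp add: mult_less_0_iff)
        then show ?thesis using False \<open>a (i-1) l0 < 0\<close> that unfolding s_def by (auto simp: zero_less_mult_iff)
      qed
      show ?thesis
      proof (intro exI[of _ d] conjI d bexI[OF _ sin] allI impI)
        fix l assume l: "0 < \<bar>l - l0\<bar> \<and> \<bar>l - l0\<bar> < d"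
        then have ll: "l \<noteq> l0" "dist l l0 < d" by (auto simp: dist_real_def)
        note dl = dP[OF ll]
        have sg: "0 < s * a (i-1) l" "s * a i l < 0" using sgn dl by auto
        have "h l \<noteq> 0" using dl by auto
        then have gnz: "det2 (eqd n P l i - eqd n P l j) (Wl l) \<noteq> 0"
          using gfac[of l] ll unfolding g_def Wl_def by simp
        show "(closed_segment (eqd n P l j) (eqd n P l (j + 1)) \<inter>
               closed_segment (eqd n P l (i - 1)) (eqd n P l i))
            \<union> (closed_segment (eqd n P l j) (eqd n P l (j + 1)) \<inter>
               closed_segment (eqd n P l i) (eqd n P l (i + 1)))
            \<subseteq> diag_halfplane n P i s"
          unfolding Gm Gp
        proof safe
          fix x assume x1: "x \<in> closed_segment (eqd n P l j) (eqd n P l j + Wl l)"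
            and x2: "x \<in> closed_segment (eqd n P l i - E1 l) (eqd n P l i)"
          obtain t where t: "0 < t" "x = eqd n P l i - complex_of_real t * E1 l"
            using G1[OF x1 x2 gnz] by blast
          have "0 < (s * a (i-1) l) * (t * (- det2 v (edgev P (i-1))))"
            using sg t d1 by (simp add: mult_pos_pos mult_pos_neg)
          then show "x \<in> diag_halfplane n P i s" unfolding HP t(2) hp by (simp add: algebra_simps)
        next
          fix x assume x1: "x \<in> closed_segment (eqd n P l j) (eqd n P l j + Wl l)"
            and x2: "x \<in> closed_segment (eqd n P l i) (eqd n P l i + E2 l)"
          obtain t where t: "0 < t" "x = eqd n P l i + complex_of_real t * E2 l"
            using G1'[OF x1 x2 gnz] by blast
          have "0 < (- (s * a i l)) * (t * (- det2 v (edgev P i)))"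
          proof -
            have "0 < t * (- det2 v (edgev P i))" using t d2 by (simp add: mult_pos_neg)
            moreover have "0 < - (s * a i l)" using sg by simp
            ultimately show ?thesis using mult_pos_pos by blast
          qed
          then show "x \<in> diag_halfplane n P i s" unfolding HP t(2) hp2 by (simp add: algebra_simps)
        qed
      qed
    qed
  qed
qed

end
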